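(* Let $f_d:\mathbb{R}^n\times\mathbb{R}^m\to\mathbb{R}^n$ and $g_d:\mathbb{R}^n\times\mathbb{R}^m\to\mathbb{R}$ be of class $C^1$, $\tau>0$, and $H_d(x,p,u)=g_d(x,u)+\langle p,f_d(x,u)\rangle$. Writing $x^d_k=\frac{x_{k+1}+x_k}{2}$, $p^d_k=\frac{p_{k+1}+p_k}{2}$, $u^d_k=\frac{u_{k+1}+u_k}{2}$, consider the midpoint discrete necessary conditions for optimality $$\frac{x_{k+1}-x_k}{\tau}=D_2H_d(x^d_k,p^d_k,u^d_k),\quad \frac{p_{k+1}-p_k}{\tau}=-D_1H_d(x^d_k,p^d_k,u^d_k),\quad 0=D_3H_d(x^d_k,p^d_k,u^d_k).$$ Let $W\subset\mathbb{R}^{2n}$ be open and let $F:W\to\mathbb{R}^{2n}$ and $w:W\to\mathbb{R}^m$ be $C^1$ maps such that for every $(x_k,p_k)\in W$, with $(x_{k+1},p_{k+1})=F(x_k,p_k)$ and $u^d_k=w(x_k,p_k)$, these equations hold. Then $F$ is symplectic: $F^*\big(\sum_i dp_i\wedge dx^i\big)=\sum_i dp_i\wedge dx^i$.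
   Context: These equations arise from the discrete optimal control problem of minimizing $\sum_{k=0}^{n-1}g_d(x^d_k,u^d_k)\tau$ subject to $(x_{k+1}-x_k)/\tau=f_d(x^d_k,u^d_k)$, using the midpoint discretization. *)

theory Defs
  imports "HOL-Analysis.Analysis"
begin

definition C1_on :: "'a::real_normed_vector set \<Rightarrow> ('a \<Rightarrow> 'b::real_normed_vector) \<Rightarrow> bool" where
  "C1_on S f \<longleftrightarrow> (\<exists>f'. (\<forall>z\<in>S. (f has_derivative blinfun_apply (f' z)) (at z)) \<and> continuous_on S f')"

definition Hd :: "((real^'n) \<times> (real^'m) \<Rightarrow> real^'n) \<Rightarrow> ((real^'n) \<times> (real^'m) \<Rightarrow> real)
    \<Rightarrow> real^'n \<Rightarrow> real^'n \<Rightarrow> real^'m \<Rightarrow> real" where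
  "Hd f g x p u = g (x, u) + p \<bullet> f (x, u)"

text \<open>The canonical two-form sum_i dp_i /\ dx^i on R^{2n} with coordinates (x,p):
  evaluated on tangent vectors (a1,b1),(a2,b2) it gives <b1,a2> - <b2,a1>.\<close>
definition omega :: "(real^'n) \<times> (real^'n) \<Rightarrow> (real^'n) \<times> (real^'n) \<Rightarrow> real" where
  "omega v w = snd v \<bullet> fst w - snd w \<bullet> fst v"

definition symplectic_on :: "((real^'n) \<times> (real^'n)) set \<Rightarrow> ((real^'n) \<times> (real^'n) \<Rightarrow> (real^'n) \<times> (real^'n)) \<Rightarrow> bool" where
  "symplectic_on W F \<longleftrightarrow> (\<forall>z\<in>W. \<forall>v w.
      omega (frechet_derivative F (at z) v) (frechet_derivative F (at z) w) = omega v w)"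

end

theory Submission
  imports Defs
begin


lemma edge_bound:
  fixes f f' :: "real \<Rightarrow> real"
  assumes h: "0 \<le> h"
    and d: "\<And>t. t \<in> {0..h} \<Longrightarrow> (f has_real_derivative f' t) (at t)"
    and b: "\<And>t. t \<in> {0..h} \<Longrightarrow> \<bar>f' t - (c0 + c1 * t)\<bar> \<le> K"
  shows "\<bar>f h - f 0 - (c0 * h + c1 * h^2 / 2)\<bar> \<le> K * h"
proof (cases "h = 0")
  case True then show ?thesis by simp
next
  case False
  hence hp: "0 < h" using h by simp
  define g where "g t = f t - (c0 * t + c1 * t^2 / 2)" for t
  have "\<And>t. 0 \<le> t \<Longrightarrow> t \<le> h \<Longrightarrow> (g has_real_derivative (f' t - (c0 + c1 * t))) (at t)"
    unfolding g_def using d by (auto intro!: derivative_eq_intros simp: power2_eq_square)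
  from MVT2[OF hp this] obtain t where t: "0 < t" "t < h" "g h - g 0 = (h - 0) * (f' t - (c0 + c1 * t))"
    by blast
  have "\<bar>g h - g 0\<bar> \<le> h * K" using t b[of t] hp
    by (simp add: abs_mult mult_left_mono)
  then show ?thesis unfolding g_def by (simp add: algebra_simps)
qed

lemma edge:
  fixes G :: "'a::real_normed_vector \<Rightarrow> real" and a m :: "'a \<Rightarrow> 'b::real_inner"
  assumes G: "\<And>y. y \<in> S \<Longrightarrow> (G has_derivative (\<lambda>k. a y \<bullet> Dm y k)) (at y)"
    and m: "\<And>y. y \<in> S \<Longrightarrow> (m has_derivative Dm y) (at y)"
    and Bd: "\<And>y k. y \<in> S \<Longrightarrow> norm (Dm y k) \<le> B * norm k"
    and aa: "\<And>y. y \<in> S \<Longrightarrow> norm (a y - a z - Da (y - z)) \<le> \<epsilon> * norm (y - z)"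
    and ma: "\<And>y. y \<in> S \<Longrightarrow> norm (m y - m z - Dm z (y - z)) \<le> \<epsilon> * norm (y - z)"
    and lDa: "bounded_linear Da" and lDm: "linear (Dm z)"
    and path: "\<And>t. t \<in> {0..h} \<Longrightarrow> y0 + t *\<^sub>R e \<in> S"
    and R: "\<And>t. t \<in> {0..h} \<Longrightarrow> norm (y0 + t *\<^sub>R e - z) \<le> R"
    and h: "0 \<le> h" and \<epsilon>: "0 \<le> \<epsilon>"
    and Phi: "\<And>y. \<Phi> y = G y - (a z + Da (y - z)) \<bullet> m y"
  shows "\<bar>\<Phi> (y0 + h *\<^sub>R e) - \<Phi> y0
          - ((- (Da e \<bullet> (m z + Dm z (y0 - z)))) * h + (- (Da e \<bullet> Dm z e)) * h^2 / 2)\<bar>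
         \<le> \<epsilon> * R * (B * norm e + norm (Da e)) * h"
proof -
  define f where "f t = \<Phi> (y0 + t *\<^sub>R e)" for t
  define f' where "f' t = a (y0 + t *\<^sub>R e) \<bullet> Dm (y0 + t *\<^sub>R e) e
     - (Da e \<bullet> m (y0 + t *\<^sub>R e) + (a z + Da (y0 + t *\<^sub>R e - z)) \<bullet> Dm (y0 + t *\<^sub>R e) e)" for t
  have lDy: "linear (Dm y)" if "y \<in> S" for y
    using m[OF that] by (simp add: has_derivative_linear)
  have dPhi: "(\<Phi> has_derivative (\<lambda>k. a y \<bullet> Dm y k - (Da k \<bullet> m y + (a z + Da (y - z)) \<bullet> Dm y k))) (at y)"
    if "y \<in> S" for y
    unfolding Phi
    by (auto intro!: derivative_eq_intros G[OF that] m[OF that] bounded_linear.has_derivative[OF lDa]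
         simp: algebra_simps)
  have df: "(f has_real_derivative f' t) (at t)" if "t \<in> {0..h}" for t
  proof -
    have p: "((\<lambda>t. y0 + t *\<^sub>R e) has_derivative (\<lambda>s. s *\<^sub>R e)) (at t)"
      by (auto intro!: derivative_eq_intros)
    have "((\<Phi> \<circ> (\<lambda>t. y0 + t *\<^sub>R e)) has_derivative
       ((\<lambda>k. a (y0 + t *\<^sub>R e) \<bullet> Dm (y0 + t *\<^sub>R e) k - (Da k \<bullet> m (y0 + t *\<^sub>R e)
          + (a z + Da (y0 + t *\<^sub>R e - z)) \<bullet> Dm (y0 + t *\<^sub>R e) k)) \<circ> (\<lambda>s. s *\<^sub>R e))) (at t)"
      by (rule diff_chain_at[OF p dPhi[OF path[OF that]]])
    moreover have "((\<lambda>k. a (y0 + t *\<^sub>R e) \<bullet> Dm (y0 + t *\<^sub>R e) k - (Da k \<bullet> m (y0 + t *\<^sub>R e)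
          + (a z + Da (y0 + t *\<^sub>R e - z)) \<bullet> Dm (y0 + t *\<^sub>R e) k)) \<circ> (\<lambda>s. s *\<^sub>R e))
        = (\<lambda>s. s * f' t)"
      using linear_scale[OF lDy[OF path[OF that]]] linear_scale[OF bounded_linear.linear[OF lDa]]
      by (auto simp: fun_eq_iff f'_def algebra_simps)
    ultimately have "((\<lambda>x. \<Phi> (y0 + x *\<^sub>R e)) has_derivative (\<lambda>s. s * f' t)) (at t)"
      by (simp add: o_def)
    moreover have "(\<lambda>s. s * f' t) = (*) (f' t)" by (auto simp: fun_eq_iff)
    moreover have "f = (\<lambda>x. \<Phi> (y0 + x *\<^sub>R e))" by (rule ext) (rule f_def)
    ultimately show ?thesis
      unfolding has_field_derivative_def by simp
  qed
  have bnd: "\<bar>f' t - ((- (Da e \<bullet> (m z + Dm z (y0 - z)))) + (- (Da e \<bullet> Dm z e)) * t)\<bar>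
      \<le> \<epsilon> * R * (B * norm e + norm (Da e))" if t: "t \<in> {0..h}" for t
  proof -
    let ?y = "y0 + t *\<^sub>R e"
    have yS: "?y \<in> S" using path[OF t] .
    have eq: "f' t - ((- (Da e \<bullet> (m z + Dm z (y0 - z)))) + (- (Da e \<bullet> Dm z e)) * t)
       = (a ?y - a z - Da (?y - z)) \<bullet> Dm ?y e - Da e \<bullet> (m ?y - m z - Dm z (?y - z))"
    proof -
      have "Dm z (?y - z) = Dm z (y0 - z) + t *\<^sub>R Dm z e"
      proof -
        have "?y - z = (y0 - z) + t *\<^sub>R e" by (simp add: algebra_simps)
        then show ?thesis by (simp only: linear_add[OF lDm] linear_scale[OF lDm])
      qed
      then show ?thesis unfolding f'_def by (simp add: algebra_simps inner_diff_right inner_add_right)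
    qed
    have n1: "\<bar>(a ?y - a z - Da (?y - z)) \<bullet> Dm ?y e\<bar> \<le> (\<epsilon> * R) * (B * norm e)"
    proof -
      have "\<bar>(a ?y - a z - Da (?y - z)) \<bullet> Dm ?y e\<bar> \<le> norm (a ?y - a z - Da (?y - z)) * norm (Dm ?y e)"
        by (rule Cauchy_Schwarz_ineq2)
      also have "\<dots> \<le> (\<epsilon> * R) * (B * norm e)"
      proof (rule mult_mono)
        show "norm (a ?y - a z - Da (?y - z)) \<le> \<epsilon> * R"
          using aa[OF yS] R[OF t] \<epsilon> by (meson mult_left_mono order_trans)
      qed (use Bd[OF yS] \<epsilon> R[OF t] order_trans[OF norm_ge_zero R[OF t]] in auto)
      finally show ?thesis .
    qed
    have n2: "\<bar>Da e \<bullet> (m ?y - m z - Dm z (?y - z))\<bar> \<le> norm (Da e) * (\<epsilon> * R)"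
    proof -
      have "\<bar>Da e \<bullet> (m ?y - m z - Dm z (?y - z))\<bar> \<le> norm (Da e) * norm (m ?y - m z - Dm z (?y - z))"
        by (rule Cauchy_Schwarz_ineq2)
      also have "\<dots> \<le> norm (Da e) * (\<epsilon> * R)"
        using ma[OF yS] R[OF t] \<epsilon> by (meson mult_left_mono order_trans norm_ge_zero)
      finally show ?thesis .
    qed
    show ?thesis unfolding eq using n1 n2 by (simp add: algebra_simps)
  qed
  have "\<bar>f h - f 0 - ((- (Da e \<bullet> (m z + Dm z (y0 - z)))) * h + (- (Da e \<bullet> Dm z e)) * h^2 / 2)\<bar>
      \<le> \<epsilon> * R * (B * norm e + norm (Da e)) * h"
    by (rule edge_bound[OF h df bnd])
  then show ?thesis by (simp add: f_def)
qed

lemma closed_lemma: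
  fixes G :: "'a::real_normed_vector \<Rightarrow> real" and a m :: "'a \<Rightarrow> 'b::real_inner"
  assumes U: "open U" "z \<in> U"
    and G: "\<And>y. y \<in> U \<Longrightarrow> (G has_derivative (\<lambda>k. a y \<bullet> Dm y k)) (at y)"
    and m: "\<And>y. y \<in> U \<Longrightarrow> (m has_derivative Dm y) (at y)"
    and Bd: "\<And>y k. y \<in> U \<Longrightarrow> norm (Dm y k) \<le> B * norm k"
    and a: "(a has_derivative Da) (at z)"
  shows "Da v \<bullet> Dm z w = Da w \<bullet> Dm z v"
proof -
  define Q where "Q = Da v \<bullet> Dm z w - Da w \<bullet> Dm z v"
  define N where "N = norm v + norm w"
  define C where "C = \<bar>B\<bar> * N + norm (Da v) + norm (Da w)"
  have N0: "0 \<le> N" unfolding N_def by simp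
  have C0: "0 \<le> C" unfolding C_def using N0 by simp
  have lDa: "bounded_linear Da" using a by (simp add: has_derivative_bounded_linear)
  have lDm: "linear (Dm z)" using m[OF U(2)] by (simp add: has_derivative_linear)
  define \<Phi> where "\<Phi> y = G y - (a z + Da (y - z)) \<bullet> m y" for y
  have Bd': "norm (Dm y k) \<le> \<bar>B\<bar> * norm k" if "y \<in> U" for y k
    using Bd[OF that, of k] by (meson abs_ge_self mult_right_mono norm_ge_zero order_trans)
  have main: "\<bar>Q\<bar> \<le> \<epsilon> * (4 * N * C)" if \<epsilon>: "\<epsilon> > 0" for \<epsilon>
  proof -
    obtain d1 where d1: "d1 > 0" "\<And>y. norm (y - z) < d1 \<Longrightarrow> norm (a y - a z - Da (y - z)) \<le> \<epsilon> * norm (y - z)"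
      using a \<epsilon> unfolding has_derivative_at_alt by blast
    obtain d2 where d2: "d2 > 0" "\<And>y. norm (y - z) < d2 \<Longrightarrow> norm (m y - m z - Dm z (y - z)) \<le> \<epsilon> * norm (y - z)"
      using m[OF U(2)] \<epsilon> unfolding has_derivative_at_alt by blast
    obtain r where r: "r > 0" "ball z r \<subseteq> U" using U open_contains_ball by blast
    define \<rho> where "\<rho> = min r (min d1 d2)"
    have \<rho>: "\<rho> > 0" using r d1 d2 by (simp add: \<rho>_def)
    define S where "S = ball z \<rho>"
    have SU: "S \<subseteq> U" using r by (auto simp: S_def \<rho>_def)
    define h where "h = \<rho> / (2 * (N + 1))"
    have h0: "0 < h" using \<rho> N0 by (simp add: h_def)
    define R where "R = h * N"
    have RS: "R < \<rho>"
    proof -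
      have "h * N < h * (2 * (N + 1))" using h0 N0 by (intro mult_strict_left_mono) auto
      also have "\<dots> = \<rho>" using N0 by (simp add: h_def)
      finally show ?thesis by (simp add: R_def)
    qed
    have sq: "norm (z + s *\<^sub>R v + t *\<^sub>R w - z) \<le> R" if "s \<in> {0..h}" "t \<in> {0..h}" for s t
    proof -
      have "norm (z + s *\<^sub>R v + t *\<^sub>R w - z) = norm (s *\<^sub>R v + t *\<^sub>R w)" by simp
      also have "\<dots> \<le> \<bar>s\<bar> * norm v + \<bar>t\<bar> * norm w"
        by (metis norm_scaleR norm_triangle_ineq)
      also have "\<dots> \<le> h * norm v + h * norm w"
        using that by (intro add_mono mult_right_mono) auto
      finally show ?thesis by (simp add: R_def N_def algebra_simps)
    qed
    have inS: "z + s *\<^sub>R v + t *\<^sub>R w \<in> S" if "s \<in> {0..h}" "t \<in> {0..h}" for s t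
      using sq[OF that] RS by (simp add: S_def dist_norm norm_minus_commute add_ac)
    have aa: "norm (a y - a z - Da (y - z)) \<le> \<epsilon> * norm (y - z)" if "y \<in> S" for y
      using that d1 by (auto simp: S_def \<rho>_def dist_norm norm_minus_commute)
    have ma: "norm (m y - m z - Dm z (y - z)) \<le> \<epsilon> * norm (y - z)" if "y \<in> S" for y
      using that d2 by (auto simp: S_def \<rho>_def dist_norm norm_minus_commute)
    have GS: "(G has_derivative (\<lambda>k. a y \<bullet> Dm y k)) (at y)" if "y \<in> S" for y using G SU that by blast
    have mS: "(m has_derivative Dm y) (at y)" if "y \<in> S" for y using m SU that by blast
    have BS: "norm (Dm y k) \<le> \<bar>B\<bar> * norm k" if "y \<in> S" for y k using Bd' SU that by blast
    have K: "\<epsilon> * R * (\<bar>B\<bar> * norm e + norm (Da e)) * h \<le> \<epsilon> * R * C * h" if "e = v \<or> e = w" for e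
    proof -
      have "\<bar>B\<bar> * norm e + norm (Da e) \<le> C"
        using that unfolding C_def N_def
        by (auto simp: algebra_simps intro: add_mono mult_left_mono)
      moreover have "0 \<le> \<epsilon> * R" using \<epsilon> h0 N0 by (simp add: R_def)
      ultimately show ?thesis using h0 by (intro mult_right_mono mult_left_mono) auto
    qed
    have E: "\<bar>\<Phi> (y0 + h *\<^sub>R e) - \<Phi> y0 -
       (- (Da e \<bullet> (m z + Dm z (y0 - z))) * h + - (Da e \<bullet> Dm z e) * h\<^sup>2 / 2)\<bar>
      \<le> \<epsilon> * R * C * h"
      if p: "\<And>t. t \<in> {0..h} \<Longrightarrow> y0 + t *\<^sub>R e \<in> S"
        and q: "\<And>t. t \<in> {0..h} \<Longrightarrow> norm (y0 + t *\<^sub>R e - z) \<le> R"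
        and ev: "e = v \<or> e = w" for y0 e
    proof (rule order_trans[OF _ K[OF ev]])
      show "\<bar>\<Phi> (y0 + h *\<^sub>R e) - \<Phi> y0 -
       (- (Da e \<bullet> (m z + Dm z (y0 - z))) * h + - (Da e \<bullet> Dm z e) * h\<^sup>2 / 2)\<bar>
      \<le> \<epsilon> * R * (\<bar>B\<bar> * norm e + norm (Da e)) * h"
        by (rule edge[where S=S and G=G and a=a and m=m and Dm=Dm and B="\<bar>B\<bar>" and z=z and \<epsilon>=\<epsilon> and Da=Da
          and h=h and R=R and \<Phi>=\<Phi>]) (use GS mS BS aa ma lDa lDm p q h0 \<epsilon> \<Phi>_def in auto)
    qed
    have e1: "\<bar>\<Phi> (z + h *\<^sub>R v) - \<Phi> z - ((- (Da v \<bullet> (m z + Dm z (z - z)))) * h + (- (Da v \<bullet> Dm z v)) * h^2 / 2)\<bar>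
        \<le> \<epsilon> * R * C * h"
    proof -
      have p: "z + t *\<^sub>R v \<in> S" if "t \<in> {0..h}" for t using inS[OF that, of 0] h0 by simp
      have q: "norm (z + t *\<^sub>R v - z) \<le> R" if "t \<in> {0..h}" for t using sq[OF that, of 0] h0 by simp
      show ?thesis using E[OF p q] by simp
    qed
    have e2: "\<bar>\<Phi> (z + h *\<^sub>R v + h *\<^sub>R w) - \<Phi> (z + h *\<^sub>R v) - ((- (Da w \<bullet> (m z + Dm z (z + h *\<^sub>R v - z)))) * h + (- (Da w \<bullet> Dm z w)) * h^2 / 2)\<bar>
        \<le> \<epsilon> * R * C * h"
    proof -
      have p: "z + h *\<^sub>R v + t *\<^sub>R w \<in> S" if "t \<in> {0..h}" for t using inS[OF _ that, of h] h0 by simp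
      have q: "norm (z + h *\<^sub>R v + t *\<^sub>R w - z) \<le> R" if "t \<in> {0..h}" for t using sq[OF _ that, of h] h0 by simp
      show ?thesis using E[OF p q] by simp
    qed
    have e3: "\<bar>\<Phi> (z + h *\<^sub>R w) - \<Phi> z - ((- (Da w \<bullet> (m z + Dm z (z - z)))) * h + (- (Da w \<bullet> Dm z w)) * h^2 / 2)\<bar>
        \<le> \<epsilon> * R * C * h"
    proof -
      have p: "z + t *\<^sub>R w \<in> S" if "t \<in> {0..h}" for t using inS[OF _ that, of 0] h0 by simp
      have q: "norm (z + t *\<^sub>R w - z) \<le> R" if "t \<in> {0..h}" for t using sq[OF _ that, of 0] h0 by simp
      show ?thesis using E[OF p q] by simp
    qed
    have e4: "\<bar>\<Phi> (z + h *\<^sub>R w + h *\<^sub>R v) - \<Phi> (z + h *\<^sub>R w) - ((- (Da v \<bullet> (m z + Dm z (z + h *\<^sub>R w - z)))) * h + (- (Da v \<bullet> Dm z v)) * h^2 / 2)\<bar>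
        \<le> \<epsilon> * R * C * h"
    proof -
      have p: "z + h *\<^sub>R w + t *\<^sub>R v \<in> S" if "t \<in> {0..h}" for t
        using inS[OF that, of h] h0 by (simp add: add_ac)
      have q: "norm (z + h *\<^sub>R w + t *\<^sub>R v - z) \<le> R" if "t \<in> {0..h}" for t
        using sq[OF that, of h] h0 by (simp add: add_ac)
      show ?thesis using E[OF p q] by simp
    qed
    have endp: "z + h *\<^sub>R w + h *\<^sub>R v = z + h *\<^sub>R v + h *\<^sub>R w" by (simp add: add_ac)
    have dz: "Dm z (z - z) = 0" using linear_0[OF lDm] by simp
    have dv: "Dm z (z + h *\<^sub>R v - z) = h *\<^sub>R Dm z v" using linear_scale[OF lDm] by simp
    have dw: "Dm z (z + h *\<^sub>R w - z) = h *\<^sub>R Dm z w" using linear_scale[OF lDm] by simp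
    define T1 where "T1 = (- (Da v \<bullet> (m z + Dm z (z - z)))) * h + (- (Da v \<bullet> Dm z v)) * h^2 / 2"
    define T2 where "T2 = (- (Da w \<bullet> (m z + Dm z (z + h *\<^sub>R v - z)))) * h + (- (Da w \<bullet> Dm z w)) * h^2 / 2"
    define T3 where "T3 = (- (Da w \<bullet> (m z + Dm z (z - z)))) * h + (- (Da w \<bullet> Dm z w)) * h^2 / 2"
    define T4 where "T4 = (- (Da v \<bullet> (m z + Dm z (z + h *\<^sub>R w - z)))) * h + (- (Da v \<bullet> Dm z v)) * h^2 / 2"
    have key: "h^2 * Q = (T1 + T2) - (T3 + T4)"
      unfolding T1_def T2_def T3_def T4_def dz dv dw Q_def
      by (simp add: inner_add_right power2_eq_square algebra_simps)
    have "\<bar>h^2 * Q\<bar> \<le> 4 * (\<epsilon> * R * C * h)"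
      using e1 e2 e3 e4 unfolding key endp T1_def[symmetric] T2_def[symmetric] T3_def[symmetric] T4_def[symmetric]
      by (simp add: abs_le_iff)
    hence "h * (h * \<bar>Q\<bar>) \<le> h * (h * (\<epsilon> * (4 * N * C)))"
      by (simp add: abs_mult power2_eq_square R_def algebra_simps)
    thus ?thesis using h0 by (simp add: mult_le_cancel_left_pos)
  qed
  show ?thesis
  proof (rule ccontr)
    assume "\<not> ?thesis"
    hence Qp: "\<bar>Q\<bar> > 0" by (simp add: Q_def)
    define \<epsilon> where "\<epsilon> = \<bar>Q\<bar> / (4 * N * C + 1)"
    have den: "4 * N * C + 1 > 0" using N0 C0 by (simp add: add_nonneg_pos)
    have ep: "\<epsilon> > 0" using Qp den by (simp add: \<epsilon>_def)
    have "\<epsilon> * (4 * N * C) < \<epsilon> * (4 * N * C + 1)" using ep by simp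
    also have "\<dots> = \<bar>Q\<bar>" using den by (simp add: \<epsilon>_def)
    finally show False using main[OF ep] by simp
  qed
qed



definition H3 :: "((real^'n) \<times> (real^'m) \<Rightarrow> real^'n) \<Rightarrow> ((real^'n) \<times> (real^'m) \<Rightarrow> real)
   \<Rightarrow> (real^'n) \<times> (real^'n) \<times> (real^'m) \<Rightarrow> real" where
  "H3 fd gd t = Hd fd gd (fst t) (fst (snd t)) (snd (snd t))"

lemma H3_deriv:
  fixes fd :: "(real^'n) \<times> (real^'m) \<Rightarrow> real^'n" and gd :: "(real^'n) \<times> (real^'m) \<Rightarrow> real"
  assumes f: "(fd has_derivative fD) (at (x,u))" and g: "(gd has_derivative gD) (at (x,u))"
  shows "(H3 fd gd has_derivative
     (\<lambda>k. gD (fst k, snd (snd k)) + (fst (snd k) \<bullet> fd (x,u) + p \<bullet> fD (fst k, snd (snd k))))) (at (x,p,u))"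
proof -
  have pi: "((\<lambda>t::(real^'n) \<times> (real^'n) \<times> (real^'m). (fst t, snd (snd t))) has_derivative (\<lambda>k. (fst k, snd (snd k)))) (at (x,p,u))"
    by (auto intro!: derivative_eq_intros)
  have g': "((\<lambda>t. gd (fst t, snd (snd t))) has_derivative (\<lambda>k. gD (fst k, snd (snd k)))) (at (x,p,u))"
    using has_derivative_compose[OF pi] g by simp
  have f': "((\<lambda>t. fd (fst t, snd (snd t))) has_derivative (\<lambda>k. fD (fst k, snd (snd k)))) (at (x,p,u))"
    using has_derivative_compose[OF pi] f by simp
  have sn: "((\<lambda>t::(real^'n) \<times> (real^'n) \<times> (real^'m). fst (snd t)) has_derivative (\<lambda>k. fst (snd k))) (at (x,p,u))"
    by (auto intro!: derivative_eq_intros)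
  have "((\<lambda>t. gd (fst t, snd (snd t)) + fst (snd t) \<bullet> fd (fst t, snd (snd t))) has_derivative
     (\<lambda>k. gD (fst k, snd (snd k)) + (fst (snd (x,p,u)) \<bullet> fD (fst k, snd (snd k)) + fst (snd k) \<bullet> fd (fst (x,p,u), snd (snd (x,p,u)))))) (at (x,p,u))"
    by (intro has_derivative_add g' has_derivative_inner sn f')
  then show ?thesis unfolding H3_def[abs_def] Hd_def by (simp add: add_ac)
qed

theorem mainTheorem9:
  fixes fd :: "(real^'n) \<times> (real^'m) \<Rightarrow> real^'n"
    and gd :: "(real^'n) \<times> (real^'m) \<Rightarrow> real"
    and \<tau> :: real
    and W :: "((real^'n) \<times> (real^'n)) set"
    and F :: "(real^'n) \<times> (real^'n) \<Rightarrow> (real^'n) \<times> (real^'n)"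
    and w :: "(real^'n) \<times> (real^'n) \<Rightarrow> real^'m"
  assumes "C1_on UNIV fd" and "C1_on UNIV gd" and "\<tau> > 0"
    and "open W" and "C1_on W F" and "C1_on W w"
    and eqs: "\<And>xk pk. (xk, pk) \<in> W \<Longrightarrow>
      (let xk1 = fst (F (xk, pk)); pk1 = snd (F (xk, pk));
           xd = (1/2) *\<^sub>R (xk1 + xk); pd = (1/2) *\<^sub>R (pk1 + pk); ud = w (xk, pk)
       in ((\<lambda>p. Hd fd gd xd p ud) has_derivative (\<lambda>v. ((1/\<tau>) *\<^sub>R (xk1 - xk)) \<bullet> v)) (at pd)
        \<and> ((\<lambda>x. Hd fd gd x pd ud) has_derivative (\<lambda>v. (- ((1/\<tau>) *\<^sub>R (pk1 - pk))) \<bullet> v)) (at xd)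
        \<and> ((\<lambda>u. Hd fd gd xd pd u) has_derivative (\<lambda>v. 0)) (at ud))"
  shows "symplectic_on W F"
proof -
  obtain fD where fD: "\<And>q. (fd has_derivative blinfun_apply (fD q)) (at q)"
    using assms(1) unfolding C1_on_def by blast
  obtain gD where gD: "\<And>q. (gd has_derivative blinfun_apply (gD q)) (at q)"
    using assms(2) unfolding C1_on_def by blast
  obtain F' where F'd: "\<And>y. y \<in> W \<Longrightarrow> (F has_derivative blinfun_apply (F' y)) (at y)"
    and F'c: "continuous_on W F'"
    using assms(5) unfolding C1_on_def by blast
  obtain w' where w'd: "\<And>y. y \<in> W \<Longrightarrow> (w has_derivative blinfun_apply (w' y)) (at y)"
    using assms(6) unfolding C1_on_def by blast
  have H3D: "\<exists>D. (H3 fd gd has_derivative D) (at t)" for t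
  proof -
    obtain x p u where t: "t = (x,p,u)" by (cases t) auto
    show ?thesis unfolding t by (rule exI, rule H3_deriv[OF fD gD])
  qed
  define mm where "mm y = (1/2) *\<^sub>R (F y + y)" for y
  define Dm where "Dm y k = (1/2) *\<^sub>R (F' y k + k)" for y k
  define aa where "aa y = (- (snd (F y) - snd y), fst (F y) - fst y)" for y
  define G where "G y = \<tau> * H3 fd gd (fst (mm y), snd (mm y), w y)" for y
  have mmd: "(mm has_derivative Dm y) (at y)" if "y \<in> W" for y
    unfolding mm_def[abs_def] Dm_def
    by (auto intro!: derivative_eq_intros F'd[OF that])
  have Gd: "(G has_derivative (\<lambda>k. aa y \<bullet> Dm y k)) (at y)" if yW: "y \<in> W" for y
  proof -
    obtain xk pk where y: "y = (xk, pk)" by (cases y)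
    define xk1 where "xk1 = fst (F (xk, pk))"
    define pk1 where "pk1 = snd (F (xk, pk))"
    define xd where "xd = (1/2) *\<^sub>R (xk1 + xk)"
    define pd where "pd = (1/2) *\<^sub>R (pk1 + pk)"
    define ud where "ud = w (xk, pk)"
    have tt: "(fst (mm y), snd (mm y), w y) = (xd, pd, ud)"
      by (simp add: mm_def y xd_def pd_def ud_def xk1_def pk1_def)
    obtain D where D: "(H3 fd gd has_derivative D) (at (xd, pd, ud))" using H3D by blast
    have lD: "linear D" using D by (rule has_derivative_linear)
    have E: "((\<lambda>p. Hd fd gd xd p ud) has_derivative (\<lambda>v. ((1/\<tau>) *\<^sub>R (xk1 - xk)) \<bullet> v)) (at pd)
        \<and> ((\<lambda>x. Hd fd gd x pd ud) has_derivative (\<lambda>v. (- ((1/\<tau>) *\<^sub>R (pk1 - pk))) \<bullet> v)) (at xd)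
        \<and> ((\<lambda>u. Hd fd gd xd pd u) has_derivative (\<lambda>v. 0)) (at ud)"
      using eqs[of xk pk] yW[unfolded y] unfolding Let_def xd_def pd_def ud_def xk1_def pk1_def by blast
    have c1: "((\<lambda>p. Hd fd gd xd p ud) has_derivative (\<lambda>v. D (0, v, 0))) (at pd)"
    proof -
      have l: "((\<lambda>p. (xd, p, ud)) has_derivative (\<lambda>v. (0, v, 0))) (at pd)"
        by (auto intro!: derivative_eq_intros)
      show ?thesis using has_derivative_compose[OF l D] by (simp add: H3_def)
    qed
    have c2: "((\<lambda>x. Hd fd gd x pd ud) has_derivative (\<lambda>v. D (v, 0, 0))) (at xd)"
    proof -
      have l: "((\<lambda>x. (x, pd, ud)) has_derivative (\<lambda>v. (v, 0, 0))) (at xd)"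
        by (auto intro!: derivative_eq_intros simp: zero_prod_def)
      show ?thesis using has_derivative_compose[OF l D] by (simp add: H3_def)
    qed
    have c3: "((\<lambda>u. Hd fd gd xd pd u) has_derivative (\<lambda>v. D (0, 0, v))) (at ud)"
    proof -
      have l: "((\<lambda>u. (xd, pd, u)) has_derivative (\<lambda>v. (0, 0, v))) (at ud)"
        by (auto intro!: derivative_eq_intros)
      show ?thesis using has_derivative_compose[OF l D] by (simp add: H3_def)
    qed
    have D1: "D (0, v, 0) = ((1/\<tau>) *\<^sub>R (xk1 - xk)) \<bullet> v" for v
      using has_derivative_unique[OF c1 conjunct1[OF E]] by metis
    have D2: "D (v, 0, 0) = (- ((1/\<tau>) *\<^sub>R (pk1 - pk))) \<bullet> v" for v
      using has_derivative_unique[OF c2 conjunct1[OF conjunct2[OF E]]] by metis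
    have D3: "D (0, 0, v) = 0" for v
      using has_derivative_unique[OF c3 conjunct2[OF conjunct2[OF E]]] by metis
    have Dsplit: "D (a, b, c) = D (a, 0, 0) + D (0, b, 0) + D (0, 0, c)" for a b c
    proof -
      have "(a, b, c) = (a, 0, 0) + (0, b, 0) + (0, 0, c)" by simp
      then show ?thesis by (metis linear_add[OF lD])
    qed
    have phi: "((\<lambda>y. (fst (mm y), snd (mm y), w y)) has_derivative (\<lambda>k. (fst (Dm y k), snd (Dm y k), w' y k))) (at y)"
      by (auto intro!: derivative_eq_intros mmd[OF yW] w'd[OF yW])
    have "((\<lambda>y. H3 fd gd (fst (mm y), snd (mm y), w y)) has_derivative (\<lambda>k. D (fst (Dm y k), snd (Dm y k), w' y k))) (at y)"
      using has_derivative_compose[OF phi] D tt by simp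
    then have "(G has_derivative (\<lambda>k. \<tau> * D (fst (Dm y k), snd (Dm y k), w' y k))) (at y)"
      unfolding G_def[abs_def] by (rule has_derivative_mult_right)
    moreover have "\<tau> * D (fst (Dm y k), snd (Dm y k), w' y k) = aa y \<bullet> Dm y k" for k
    proof -
      have "\<tau> * D (fst (Dm y k), snd (Dm y k), w' y k)
          = \<tau> * ((- ((1/\<tau>) *\<^sub>R (pk1 - pk))) \<bullet> fst (Dm y k) + ((1/\<tau>) *\<^sub>R (xk1 - xk)) \<bullet> snd (Dm y k))"
        unfolding Dsplit[of "fst (Dm y k)" "snd (Dm y k)" "w' y k"] D1 D2 D3 by simp
      also have "\<dots> = (- (pk1 - pk)) \<bullet> fst (Dm y k) + (xk1 - xk) \<bullet> snd (Dm y k)"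
        using assms(3) by (simp add: algebra_simps)
      also have "\<dots> = aa y \<bullet> Dm y k"
        by (simp add: aa_def inner_prod_def y xk1_def pk1_def)
      finally show ?thesis .
    qed
    ultimately show ?thesis by simp
  qed
  show ?thesis
    unfolding symplectic_on_def
  proof (intro ballI allI)
    fix z v v'
    assume zW: "z \<in> W"
    obtain r where r: "r > 0" "\<And>y. y \<in> W \<Longrightarrow> dist y z < r \<Longrightarrow> dist (F' y) (F' z) < 1"
      using F'c zW unfolding continuous_on_iff by (meson zero_less_one)
    define U where "U = W \<inter> ball z r"
    have U: "open U" "z \<in> U" using assms(4) zW r by (auto simp: U_def)
    define B where "B = (norm (F' z) + 2) / 2"
    have Bd: "norm (Dm y k) \<le> B * norm k" if "y \<in> U" for y k
    proof -
      have yW: "y \<in> W" and dy: "dist y z < r" using that by (auto simp: U_def dist_commute)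
      have nF: "norm (F' y) \<le> norm (F' z) + 1"
        using r(2)[OF yW dy] norm_triangle_ineq2[of "F' y" "F' z"] by (simp add: dist_norm)
      have "norm (Dm y k) = (1/2) * norm (F' y k + k)" by (simp add: Dm_def)
      also have "\<dots> \<le> (1/2) * (norm (F' y) * norm k + norm k)"
        using norm_triangle_ineq[of "F' y k" k] norm_blinfun[of "F' y" k] by simp
      also have "\<dots> \<le> (1/2) * ((norm (F' z) + 1) * norm k + norm k)"
        using nF by (simp add: mult_right_mono)
      also have "\<dots> = B * norm k" by (simp add: B_def algebra_simps)
      finally show ?thesis .
    qed
    define Da where "Da k = (- (snd (F' z k) - snd k), fst (F' z k) - fst k)" for k
    have ad: "(aa has_derivative Da) (at z)"
      unfolding aa_def[abs_def] Da_def[abs_def]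
      by (auto intro!: derivative_eq_intros F'd[OF zW])
    have sym: "Da a \<bullet> Dm z b = Da b \<bullet> Dm z a" for a b
      by (rule closed_lemma[OF U _ _ Bd ad]) (use Gd mmd U_def in auto)
    have fr: "frechet_derivative F (at z) = F' z"
      using frechet_derivative_at[OF F'd[OF zW]] by simp
    show "omega (frechet_derivative F (at z) v) (frechet_derivative F (at z) v') = omega v v'"
      using sym[of v v'] unfolding fr omega_def Da_def Dm_def
      by (simp add: inner_prod_def inner_diff_left inner_diff_right inner_add_left inner_add_right
          algebra_simps inner_commute)
  qed
qed

end
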